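(* Let $L,R$ be nonempty subsets of a group $G$ and $s\in G$. In $2\mathrm{S}(G;L,R)$, if $g=w_{\bar{L},m,a}\,s\,w_{\bar{R},n,b}$ for integers $m,a,n,b\ge0$, then for every $l\in L$ and $r\in R$ we have $g\sim l^ds$ and $g\sim sr^d$, where $d=m+n-(a+b)$.
   Context: For nonempty subsets $L,R$ of a group $G$, the two-sided group digraph $2\mathrm{S}(G;L,R)$ has vertex set $G$ and a directed arc $(g,h)$ if and only if $h=l^{-1}gr$ for some $l\in L$, $r\in R$. Write $\bar{L}=L\cup L^{-1}$, $\bar{R}=R\cup R^{-1}$. The notation $w_{\bar{L},m,a}$ denotes the value of a word (finite product, empty product $=e$) with $m$ factors from $L$ and $a$ factors from $L^{-1}$ in some order; similarly $w_{\bar{R},n,b}$ has $n$ factors from $R$ and $b$ from $R^{-1}$. $g\sim h$ means $g$ is weakly connected to $h$: there is a sequence $g=g_0,\dots,g_n=h$ with, for each $i$, $(g_{i-1},g_i)$ or $(g_i,g_{i-1})$ an arc. *)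

theory Defs
  imports "HOL-Algebra.Group"
begin

definition twoS_arc :: "('a, 'b) monoid_scheme \<Rightarrow> 'a set \<Rightarrow> 'a set \<Rightarrow> 'a \<Rightarrow> 'a \<Rightarrow> bool" where
  "twoS_arc G L R g h \<longleftrightarrow> g \<in> carrier G \<and> h \<in> carrier G \<and>
     (\<exists>l\<in>L. \<exists>r\<in>R. h = inv\<^bsub>G\<^esub> l \<otimes>\<^bsub>G\<^esub> g \<otimes>\<^bsub>G\<^esub> r)"

definition weakly_conn :: "('a, 'b) monoid_scheme \<Rightarrow> 'a set \<Rightarrow> 'a set \<Rightarrow> 'a \<Rightarrow> 'a \<Rightarrow> bool" where
  "weakly_conn G L R g h \<longleftrightarrow>
     (g, h) \<in> ({(x, y). twoS_arc G L R x y} \<union> {(x, y). twoS_arc G L R y x})\<^sup>*"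

definition word_val :: "('a, 'b) monoid_scheme \<Rightarrow> (bool \<times> 'a) list \<Rightarrow> 'a" where
  "word_val G ws = foldr (\<lambda>(b, x) acc. (if b then x else inv\<^bsub>G\<^esub> x) \<otimes>\<^bsub>G\<^esub> acc) ws \<one>\<^bsub>G\<^esub>"

text \<open>w is a value w_{S,m,a}: a word with m factors from S and a factors from S^-1.\<close>
definition is_word_val :: "('a, 'b) monoid_scheme \<Rightarrow> 'a set \<Rightarrow> nat \<Rightarrow> nat \<Rightarrow> 'a \<Rightarrow> bool" where
  "is_word_val G S m a w \<longleftrightarrow> (\<exists>ws. set (map snd ws) \<subseteq> S \<and>
     length (filter fst ws) = m \<and> length (filter (\<lambda>p. \<not> fst p) ws) = a \<and>
     w = word_val G ws)"

end

theory Submission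
  imports Defs
begin

definition cnt :: "(bool \<times> 'c) list \<Rightarrow> int" where
  "cnt ws = int (length (filter fst ws)) - int (length (filter (\<lambda>p. \<not> fst p) ws))"

lemma cnt_Cons: "cnt ((b,c)#ws) = (if b then 1 + cnt ws else -1 + cnt ws)"
  unfolding cnt_def by auto

context
  fixes G :: "('a, 'b) monoid_scheme" (structure) and L R :: "'a set"
  assumes grp: "group G" and LG: "L \<subseteq> carrier G" and RG: "R \<subseteq> carrier G"
begin

interpretation group G by (rule grp)

lemma wc_refl: "weakly_conn G L R x x"
  by (simp add: weakly_conn_def)

lemma wc_sym: assumes "weakly_conn G L R x y" shows "weakly_conn G L R y x"
proof -
  let ?E = "{(x, y). twoS_arc G L R x y} \<union> {(x, y). twoS_arc G L R y x}"
  have "sym ?E" unfolding sym_def by blast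
  then have "sym (?E\<^sup>*)" by (rule sym_rtrancl)
  then show ?thesis using assms unfolding weakly_conn_def by (rule symD)
qed

lemma wc_trans: "weakly_conn G L R x y \<Longrightarrow> weakly_conn G L R y z \<Longrightarrow> weakly_conn G L R x z"
  unfolding weakly_conn_def by (rule rtrancl_trans)

lemma wc_A1: assumes "x \<in> carrier G" "u \<in> L" "v \<in> R"
  shows "weakly_conn G L R x (inv u \<otimes> x \<otimes> v)"
proof -
  have "twoS_arc G L R x (inv u \<otimes> x \<otimes> v)"
    using assms LG RG unfolding twoS_arc_def by auto
  then show ?thesis unfolding weakly_conn_def by blast
qed

lemma wc_A2: assumes "x \<in> carrier G" "u \<in> L" "v \<in> R"
  shows "weakly_conn G L R x (u \<otimes> x \<otimes> inv v)"
proof -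
  have uc: "u \<in> carrier G" and vc: "v \<in> carrier G" using assms LG RG by auto
  have "inv u \<otimes> (u \<otimes> x \<otimes> inv v) \<otimes> v = x"
    using uc vc assms(1) by (simp add: m_assoc[symmetric] l_inv) (simp add: m_assoc)
  then have "twoS_arc G L R (u \<otimes> x \<otimes> inv v) x"
    using assms uc vc unfolding twoS_arc_def by (metis inv_closed m_closed)
  then show ?thesis unfolding weakly_conn_def by blast
qed

lemma wc_C1: assumes "z \<in> carrier G" "l \<in> L" "r \<in> R"
  shows "weakly_conn G L R (l \<otimes> z) (z \<otimes> r)"
proof -
  have lc: "l \<in> carrier G" using assms LG by auto
  have "inv l \<otimes> (l \<otimes> z) = z" using lc assms(1) by (simp add: m_assoc[symmetric])
  then show ?thesis using wc_A1[of "l \<otimes> z" l r] assms lc by simp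
qed

lemma wc_C2: assumes "z \<in> carrier G" "l \<in> L" "r \<in> R"
  shows "weakly_conn G L R (inv l \<otimes> z) (z \<otimes> inv r)"
proof -
  have lc: "l \<in> carrier G" using assms LG by auto
  have "l \<otimes> (inv l \<otimes> z) = z" using lc assms(1) by (simp add: m_assoc[symmetric])
  then show ?thesis using wc_A2[of "inv l \<otimes> z" l r] assms lc by simp
qed

lemma wc_C: assumes "l \<in> L" "r \<in> R"
  shows "\<And>z. z \<in> carrier G \<Longrightarrow> weakly_conn G L R (l [^] (k::int) \<otimes> z) (z \<otimes> r [^] k)"
proof (induct k rule: int_induct[where k=0])
  case base
  then show ?case using wc_refl by simp
next
  case (step1 i)
  have lc: "l \<in> carrier G" and rc: "r \<in> carrier G" using assms LG RG by auto
  have e1': "l [^] (i+1) = l [^] i \<otimes> l" using lc by (simp add: int_pow_mult)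
  have e1'': "l [^] (i+1) = l \<otimes> l [^] i" using lc int_pow_mult[of l 1 i] by (simp add: add.commute)
  have e1: "l [^] (i+1) \<otimes> z = l \<otimes> (l [^] i \<otimes> z)"
    using lc step1 e1'' by (simp add: m_assoc)
  have e2: "z \<otimes> r [^] (i+1) = (z \<otimes> r) \<otimes> r [^] i"
    using rc step1 int_pow_mult[of r 1 i] by (simp add: add.commute m_assoc)
  have "weakly_conn G L R (l \<otimes> (l [^] i \<otimes> z)) ((l [^] i \<otimes> z) \<otimes> r)"
    using wc_C1 step1 lc assms by simp
  moreover have "(l [^] i \<otimes> z) \<otimes> r = l [^] i \<otimes> (z \<otimes> r)" using lc rc step1 by (simp add: m_assoc)
  moreover have "weakly_conn G L R (l [^] i \<otimes> (z \<otimes> r)) ((z \<otimes> r) \<otimes> r [^] i)"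
    using step1 rc by simp
  ultimately show ?case using e1 e2 wc_trans by metis
next
  case (step2 i)
  have lc: "l \<in> carrier G" and rc: "r \<in> carrier G" using assms LG RG by auto
  have e1'': "l [^] (i-1) = inv l \<otimes> l [^] i" using lc int_pow_mult[of l "-1" i]
    by (simp add: int_pow_neg)
  have e1: "l [^] (i-1) \<otimes> z = inv l \<otimes> (l [^] i \<otimes> z)"
    using lc step2 e1'' by (simp add: m_assoc)
  have e2: "z \<otimes> r [^] (i-1) = (z \<otimes> inv r) \<otimes> r [^] i"
    using rc step2 int_pow_mult[of r "-1" i] by (simp add: int_pow_neg m_assoc)
  have "weakly_conn G L R (inv l \<otimes> (l [^] i \<otimes> z)) ((l [^] i \<otimes> z) \<otimes> inv r)"
    using wc_C2 step2 lc assms by simp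
  moreover have "(l [^] i \<otimes> z) \<otimes> inv r = l [^] i \<otimes> (z \<otimes> inv r)" using lc rc step2 by (simp add: m_assoc)
  moreover have "weakly_conn G L R (l [^] i \<otimes> (z \<otimes> inv r)) ((z \<otimes> inv r) \<otimes> r [^] i)"
    using step2 rc by simp
  ultimately show ?case using e1 e2 wc_trans by metis
qed


lemma word_val_closed: "set (map snd ws) \<subseteq> carrier G \<Longrightarrow> word_val G ws \<in> carrier G"
  by (induct ws) (auto simp: word_val_def)

lemma word_val_Cons: "word_val G ((b,c)#ws) = (if b then c else inv c) \<otimes> word_val G ws"
  by (simp add: word_val_def)

lemma wc_right: assumes "l \<in> L"
  shows "set (map snd ws) \<subseteq> R \<Longrightarrow> x \<in> carrier G \<Longrightarrow>
    weakly_conn G L R (x \<otimes> word_val G ws) (l [^] cnt ws \<otimes> x)"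
proof (induct ws arbitrary: x)
  case Nil
  then show ?case by (simp add: word_val_def cnt_def wc_refl)
next
  case (Cons p ws)
  obtain b c where p: "p = (b,c)" by fastforce
  have cR: "c \<in> R" and wsR: "set (map snd ws) \<subseteq> R" using Cons.prems p by auto
  have cc: "c \<in> carrier G" using cR RG by auto
  have lc: "l \<in> carrier G" using assms LG by auto
  have Wc: "word_val G ws \<in> carrier G" using wsR RG word_val_closed by auto
  define c' where "c' = (if b then c else inv c)"
  have c'c: "c' \<in> carrier G" using cc c'_def by auto
  have "x \<otimes> word_val G (p#ws) = (x \<otimes> c') \<otimes> word_val G ws"
    using p c'_def word_val_Cons Cons.prems c'c Wc by (simp add: m_assoc)
  moreover have "weakly_conn G L R ((x \<otimes> c') \<otimes> word_val G ws) (l [^] cnt ws \<otimes> (x \<otimes> c'))"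
    using Cons.hyps wsR Cons.prems c'c by simp
  moreover have "weakly_conn G L R (l [^] cnt ws \<otimes> (x \<otimes> c')) (l [^] cnt (p#ws) \<otimes> x)"
  proof (cases b)
    case True
    have "weakly_conn G L R (l [^] cnt ws \<otimes> x \<otimes> c) (l \<otimes> (l [^] cnt ws \<otimes> x \<otimes> c) \<otimes> inv c)"
      using wc_A2 assms cR lc cc Cons.prems by simp
    moreover have "l \<otimes> (l [^] cnt ws \<otimes> x \<otimes> c) \<otimes> inv c = l [^] cnt (p#ws) \<otimes> x"
      using True p lc cc Cons.prems int_pow_mult[of l 1 "cnt ws"]
      by (simp add: m_assoc cnt_Cons)
    ultimately show ?thesis using True c'_def lc cc Cons.prems by (simp add: m_assoc)
  next
    case False
    have "weakly_conn G L R (l [^] cnt ws \<otimes> x \<otimes> inv c) (inv l \<otimes> (l [^] cnt ws \<otimes> x \<otimes> inv c) \<otimes> c)"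
      using wc_A1 assms cR lc cc Cons.prems by simp
    moreover have "inv l \<otimes> (l [^] cnt ws \<otimes> x \<otimes> inv c) \<otimes> c = l [^] cnt (p#ws) \<otimes> x"
      using False p lc cc Cons.prems int_pow_mult[of l "-1" "cnt ws"]
      by (simp add: m_assoc int_pow_neg cnt_Cons)
    ultimately show ?thesis using False c'_def lc cc Cons.prems by (simp add: m_assoc)
  qed
  ultimately show ?case using wc_trans by metis
qed

lemma wc_left: assumes "r \<in> R"
  shows "set (map snd ws) \<subseteq> L \<Longrightarrow> x \<in> carrier G \<Longrightarrow>
    weakly_conn G L R (word_val G ws \<otimes> x) (x \<otimes> r [^] cnt ws)"
proof (induct ws arbitrary: x)
  case Nil
  then show ?case by (simp add: word_val_def cnt_def wc_refl)
next
  case (Cons p ws)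
  obtain b c where p: "p = (b,c)" by fastforce
  have cL: "c \<in> L" and wsL: "set (map snd ws) \<subseteq> L" using Cons.prems p by auto
  have cc: "c \<in> carrier G" using cL LG by auto
  have rc: "r \<in> carrier G" using assms RG by auto
  have Wc: "word_val G ws \<in> carrier G" using wsL LG word_val_closed by auto
  show ?case
  proof (cases b)
    case True
    have "weakly_conn G L R (c \<otimes> (word_val G ws \<otimes> x)) ((word_val G ws \<otimes> x) \<otimes> r)"
      using wc_C1 cL assms Wc Cons.prems by simp
    moreover have "weakly_conn G L R (word_val G ws \<otimes> (x \<otimes> r)) ((x \<otimes> r) \<otimes> r [^] cnt ws)"
      using Cons.hyps wsL Cons.prems rc by simp
    moreover have "(x \<otimes> r) \<otimes> r [^] cnt ws = x \<otimes> r [^] cnt (p#ws)"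
      using True p rc Cons.prems int_pow_mult[of r 1 "cnt ws"] by (simp add: m_assoc cnt_Cons)
    moreover have "word_val G (p#ws) \<otimes> x = c \<otimes> (word_val G ws \<otimes> x)"
      using True p word_val_Cons cc Wc Cons.prems by (simp add: m_assoc)
    moreover have "(word_val G ws \<otimes> x) \<otimes> r = word_val G ws \<otimes> (x \<otimes> r)"
      using Wc rc Cons.prems by (simp add: m_assoc)
    ultimately show ?thesis using wc_trans by metis
  next
    case False
    have "weakly_conn G L R (inv c \<otimes> (word_val G ws \<otimes> x)) ((word_val G ws \<otimes> x) \<otimes> inv r)"
      using wc_C2 cL assms Wc Cons.prems by simp
    moreover have "weakly_conn G L R (word_val G ws \<otimes> (x \<otimes> inv r)) ((x \<otimes> inv r) \<otimes> r [^] cnt ws)"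
      using Cons.hyps wsL Cons.prems rc by simp
    moreover have "(x \<otimes> inv r) \<otimes> r [^] cnt ws = x \<otimes> r [^] cnt (p#ws)"
      using False p rc Cons.prems int_pow_mult[of r "-1" "cnt ws"] by (simp add: m_assoc int_pow_neg cnt_Cons)
    moreover have "word_val G (p#ws) \<otimes> x = inv c \<otimes> (word_val G ws \<otimes> x)"
      using False p word_val_Cons cc Wc Cons.prems by (simp add: m_assoc)
    moreover have "(word_val G ws \<otimes> x) \<otimes> inv r = word_val G ws \<otimes> (x \<otimes> inv r)"
      using Wc rc Cons.prems by (simp add: m_assoc)
    ultimately show ?thesis using wc_trans by metis
  qed
qed

lemma main_aux:
  assumes "s \<in> carrier G" "l \<in> L" "r \<in> R"
    and wsl: "set (map snd wsl) \<subseteq> L" and wsr: "set (map snd wsr) \<subseteq> R"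
  shows "weakly_conn G L R (word_val G wsl \<otimes> s \<otimes> word_val G wsr) (s \<otimes> r [^] (cnt wsl + cnt wsr))
     \<and> weakly_conn G L R (word_val G wsl \<otimes> s \<otimes> word_val G wsr) (l [^] (cnt wsl + cnt wsr) \<otimes> s)"
proof -
  have lc: "l \<in> carrier G" and rc: "r \<in> carrier G" using assms LG RG by auto
  have Wl: "word_val G wsl \<in> carrier G" using wsl LG word_val_closed by auto
  have Wr: "word_val G wsr \<in> carrier G" using wsr RG word_val_closed by auto
  let ?x = "word_val G wsl \<otimes> s"
  have xc: "?x \<in> carrier G" using Wl assms by simp
  have 1: "weakly_conn G L R (?x \<otimes> word_val G wsr) (l [^] cnt wsr \<otimes> ?x)"
    using wc_right[OF assms(2) wsr xc] .
  have 2: "weakly_conn G L R (l [^] cnt wsr \<otimes> ?x) (?x \<otimes> r [^] cnt wsr)"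
    using wc_C[OF assms(2,3) xc] .
  have 3: "weakly_conn G L R (word_val G wsl \<otimes> (s \<otimes> r [^] cnt wsr)) ((s \<otimes> r [^] cnt wsr) \<otimes> r [^] cnt wsl)"
    using wc_left[OF assms(3) wsl] assms rc by simp
  have e: "?x \<otimes> r [^] cnt wsr = word_val G wsl \<otimes> (s \<otimes> r [^] cnt wsr)"
    using Wl assms rc by (simp add: m_assoc)
  have e2: "(s \<otimes> r [^] cnt wsr) \<otimes> r [^] cnt wsl = s \<otimes> r [^] (cnt wsl + cnt wsr)"
    using assms rc int_pow_mult[of r "cnt wsr" "cnt wsl"] by (simp add: m_assoc add.commute)
  have A: "weakly_conn G L R (?x \<otimes> word_val G wsr) (s \<otimes> r [^] (cnt wsl + cnt wsr))"
    using 1 2 3 e e2 wc_trans by metis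
  have "weakly_conn G L R (l [^] (cnt wsl + cnt wsr) \<otimes> s) (s \<otimes> r [^] (cnt wsl + cnt wsr))"
    using wc_C[OF assms(2,3) assms(1)] .
  then have B: "weakly_conn G L R (s \<otimes> r [^] (cnt wsl + cnt wsr)) (l [^] (cnt wsl + cnt wsr) \<otimes> s)"
    by (rule wc_sym)
  show ?thesis using A wc_trans[OF A B] by (rule conjI)
qed

end

theorem mainTheorem14:
  fixes G :: "('a, 'b) monoid_scheme"
    and L R :: "'a set" and s g wl wr :: 'a and m a n b :: nat
  assumes "group G"
    and "L \<subseteq> carrier G" and "L \<noteq> {}"
    and "R \<subseteq> carrier G" and "R \<noteq> {}"
    and "s \<in> carrier G"
    and "is_word_val G L m a wl"
    and "is_word_val G R n b wr"
    and "g = wl \<otimes>\<^bsub>G\<^esub> s \<otimes>\<^bsub>G\<^esub> wr"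
  shows "\<forall>l\<in>L. \<forall>r\<in>R.
           weakly_conn G L R g (l [^]\<^bsub>G\<^esub> (int (m + n) - int (a + b)) \<otimes>\<^bsub>G\<^esub> s) \<and>
           weakly_conn G L R g (s \<otimes>\<^bsub>G\<^esub> r [^]\<^bsub>G\<^esub> (int (m + n) - int (a + b)))"
proof (intro ballI)
  fix l r assume l: "l \<in> L" and r: "r \<in> R"
  obtain wsl where wsl: "set (map snd wsl) \<subseteq> L" "length (filter fst wsl) = m"
    "length (filter (\<lambda>p. \<not> fst p) wsl) = a" "wl = word_val G wsl"
    using assms(7) unfolding is_word_val_def by blast
  obtain wsr where wsr: "set (map snd wsr) \<subseteq> R" "length (filter fst wsr) = n"
    "length (filter (\<lambda>p. \<not> fst p) wsr) = b" "wr = word_val G wsr"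
    using assms(8) unfolding is_word_val_def by blast
  have d: "cnt wsl + cnt wsr = int (m + n) - int (a + b)"
    using wsl wsr by (simp add: cnt_def)
  show "weakly_conn G L R g (l [^]\<^bsub>G\<^esub> (int (m + n) - int (a + b)) \<otimes>\<^bsub>G\<^esub> s) \<and>
           weakly_conn G L R g (s \<otimes>\<^bsub>G\<^esub> r [^]\<^bsub>G\<^esub> (int (m + n) - int (a + b)))"
  proof -
    have g: "g = word_val G wsl \<otimes>\<^bsub>G\<^esub> s \<otimes>\<^bsub>G\<^esub> word_val G wsr"
      using wsl(4) wsr(4) assms(9) by (simp only:)
    have M: "weakly_conn G L R g (s \<otimes>\<^bsub>G\<^esub> r [^]\<^bsub>G\<^esub> (cnt wsl + cnt wsr)) \<and>
       weakly_conn G L R g (l [^]\<^bsub>G\<^esub> (cnt wsl + cnt wsr) \<otimes>\<^bsub>G\<^esub> s)"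
      unfolding g by (rule main_aux[OF assms(1,2,4,6) l r wsl(1) wsr(1)])
    show ?thesis unfolding d[symmetric] using M by (rule conjE) (rule conjI)
  qed
qed

end
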